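(* Let $G$ be an additive subgroup of $\mathbb{C}$ with $\mathrm{rank}\,G\ge2$, and let $V$ be a nontrivial irreducible Harish-Chandra module over $\mathrm{Vir}[G]$. Let $\lambda\in\mathrm{supp}V\setminus\{0\}$ and let $G_1,G_2$ be subgroups of $G$. If $V_{\lambda+G_1}$ is a uniformly bounded $\mathrm{Vir}[G_1]$-module and $V_{\lambda+G_2}$ is a uniformly bounded $\mathrm{Vir}[G_2]$-module, then $V_{\lambda+G_1+G_2}$ is a uniformly bounded $\mathrm{Vir}[G_1+G_2]$-module.
   Context: For a nonzero additive subgroup $G$ of $\mathbb{C}$, $\mathrm{Vir}[G]$ is the complex Lie algebra with basis $\{C,d_x:x\in G\}$ and brackets $[d_x,d_y]=(y-x)d_{x+y}+\delta_{x,-y}\frac{x^3-x}{12}C$, $[C,d_x]=0$; for a subgroup $H$, $\mathrm{Vir}[H]$ is spanned by $C$ and $d_x$, $x\in H$. The rank of a subgroup $A$ of $\mathbb{C}$ is the maximal $r$ such that there exist nonzero $g_1,\dots,g_r\in A$ with $\mathbb{Z}g_1+\dots+\mathbb{Z}g_r$ a direct sum. For a module $V$ on which $C$ acts as a scalar, $V_\lambda=\{v:d_0v=\lambda v\}$; weight module: sum of weight spaces; Harish-Chandra: weight module with finite-dimensional weight spaces; $\mathrm{supp}V=\{\lambda:V_\lambda\ne0\}$; trivial: the algebra acts by zero; uniformly bounded: weight-space dimensions bounded by a fixed $N$. For $S\subseteq\mathbb{C}$, $V_S=\bigoplus_{x\in S}V_x$; $V_{\lambda+H}$ is a $\mathrm{Vir}[H]$-module.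 *)

theory Defs
  imports Complex_Main "HOL-Library.Extended_Nat"
begin

definition add_subgroup :: "complex set \<Rightarrow> bool" where
  "add_subgroup A \<longleftrightarrow> 0 \<in> A \<and> (\<forall>x\<in>A. \<forall>y\<in>A. x + y \<in> A) \<and> (\<forall>x\<in>A. - x \<in> A)"

text \<open>Nonzero g_0,...,g_(r-1) in A whose cyclic subgroups form a direct sum.\<close>
definition rank_witness :: "complex set \<Rightarrow> nat \<Rightarrow> bool" where
  "rank_witness A r \<longleftrightarrow> (\<exists>g :: nat \<Rightarrow> complex.
      (\<forall>i<r. g i \<in> A \<and> g i \<noteq> 0) \<and>
      (\<forall>m :: nat \<Rightarrow> int. (\<Sum>i<r. of_int (m i) * g i) = 0 \<longrightarrow> (\<forall>i<r. of_int (m i) * g i = 0)))"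

definition group_rank :: "complex set \<Rightarrow> enat" where
  "group_rank A = Sup {enat r | r. rank_witness A r}"

definition set_plus_c :: "complex set \<Rightarrow> complex set \<Rightarrow> complex set" where
  "set_plus_c A B = {a + b | a b. a \<in> A \<and> b \<in> B}"

text \<open>A module over Vir[G] on the complex vector space given by scalar multiplication s
  on the type 'v, on which C acts as the scalar c, and d x is the action of d_x.\<close>
definition vir_module ::
  "complex set \<Rightarrow> (complex \<Rightarrow> 'v::ab_group_add \<Rightarrow> 'v) \<Rightarrow> complex \<Rightarrow> (complex \<Rightarrow> 'v \<Rightarrow> 'v) \<Rightarrow> bool" where
  "vir_module G s c d \<longleftrightarrow> vector_space s \<and>
     (\<forall>x\<in>G. \<forall>u v. d x (u + v) = d x u + d x v) \<and>
     (\<forall>x\<in>G. \<forall>a v. d x (s a v) = s a (d x v)) \<and>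
     (\<forall>x\<in>G. \<forall>y\<in>G. \<forall>v. d x (d y v) - d y (d x v) =
         s (y - x) (d (x + y) v) + s (if x = - y then (x ^ 3 - x) / 12 * c else 0) v)"

definition weight_space :: "(complex \<Rightarrow> 'v \<Rightarrow> 'v) \<Rightarrow> (complex \<Rightarrow> 'v \<Rightarrow> 'v) \<Rightarrow> complex \<Rightarrow> 'v set" where
  "weight_space s d \<mu> = {v. d 0 v = s \<mu> v}"

definition vir_trivial :: "complex set \<Rightarrow> complex \<Rightarrow> (complex \<Rightarrow> 'v::ab_group_add \<Rightarrow> 'v) \<Rightarrow> bool" where
  "vir_trivial G c d \<longleftrightarrow> c = 0 \<and> (\<forall>x\<in>G. \<forall>v. d x v = 0)"

definition vir_irreducible ::
  "complex set \<Rightarrow> (complex \<Rightarrow> 'v::ab_group_add \<Rightarrow> 'v) \<Rightarrow> (complex \<Rightarrow> 'v \<Rightarrow> 'v) \<Rightarrow> bool" where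
  "vir_irreducible G s d \<longleftrightarrow> (UNIV :: 'v set) \<noteq> {0} \<and>
     (\<forall>W. module.subspace s W \<and> (\<forall>x\<in>G. \<forall>w\<in>W. d x w \<in> W) \<longrightarrow> W = {0} \<or> W = UNIV)"

definition fin_dim :: "(complex \<Rightarrow> 'v::ab_group_add \<Rightarrow> 'v) \<Rightarrow> 'v set \<Rightarrow> bool" where
  "fin_dim s W \<longleftrightarrow> (\<exists>B. finite B \<and> W \<subseteq> module.span s B)"

definition harish_chandra ::
  "(complex \<Rightarrow> 'v::ab_group_add \<Rightarrow> 'v) \<Rightarrow> (complex \<Rightarrow> 'v \<Rightarrow> 'v) \<Rightarrow> bool" where
  "harish_chandra s d \<longleftrightarrow>
     (\<forall>v. v \<in> module.span s (\<Union>\<mu>. weight_space s d \<mu>)) \<and>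
     (\<forall>\<mu>. fin_dim s (weight_space s d \<mu>))"

definition supp :: "(complex \<Rightarrow> 'v::ab_group_add \<Rightarrow> 'v) \<Rightarrow> (complex \<Rightarrow> 'v \<Rightarrow> 'v) \<Rightarrow> complex set" where
  "supp s d = {\<mu>. weight_space s d \<mu> \<noteq> {0}}"

text \<open>V_{lambda+H}, as a Vir[H]-module, has weight spaces V_{lambda+h}, h in H.
  Uniformly bounded: their dimensions are bounded by a fixed N.\<close>
definition unif_bounded_coset ::
  "(complex \<Rightarrow> 'v::ab_group_add \<Rightarrow> 'v) \<Rightarrow> (complex \<Rightarrow> 'v \<Rightarrow> 'v) \<Rightarrow> complex \<Rightarrow> complex set \<Rightarrow> bool" where
  "unif_bounded_coset s d lam H \<longleftrightarrow>
     (\<exists>N::nat. \<forall>h\<in>H. fin_dim s (weight_space s d (lam + h)) \<and>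
                     vector_space.dim s (weight_space s d (lam + h)) \<le> N)"

end

theory Submission
  imports Defs
begin

lemma alg: fixes y m c :: complex
  assumes "y \<noteq> 0" "(-y-y)*m + (y^3-y)/12*c = 0" "(-(y+y)-(y+y))*m + ((y+y)^3-(y+y))/12*c = 0"
  shows "m = 0"
proof -
  have "y^3 * c = 0" using assms(2,3) by (simp add: field_simps power3_eq_cube) algebra
  then have "c = 0" using assms(1) by simp
  then show ?thesis using assms by simp
qed

context vector_space begin

lemma card_indep_le_dim:
  assumes "A \<subseteq> U" "independent A" "U \<subseteq> span BU" "finite BU"
  shows "finite A \<and> card A \<le> dim U"
proof -
  obtain C where C: "C \<subseteq> U" "independent C" "U \<subseteq> span C" "card C = dim U"
    using basis_exists by blast
  have fC: "finite C" using independent_span_bound[OF assms(4) C(2)] C(1) assms(3) by blast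
  show ?thesis using independent_span_bound[OF fC assms(2)] assms(1) C(3) C(4) by auto
qed

lemma dim_step:
  assumes W: "subspace W" and fW: "W \<subseteq> span BW" "finite BW"
    and f: "\<And>x y. f (x + y) = f x + f y" "\<And>a x. f (a *s x) = a *s f x"
    and fU: "f ` W \<subseteq> U" and U: "U \<subseteq> span BU" "finite BU"
  shows "dim W \<le> dim {w\<in>W. f w = 0} + dim U"
proof -
  interpret fh: module_hom scale scale f
    by (simp add: module_hom_iff f module_axioms)
  obtain A where A: "A \<subseteq> f ` W" "independent A" "f ` W \<subseteq> span A" "card A = dim (f ` W)"
    using basis_exists by blast
  have fA: "finite A" "card A \<le> dim U" using card_indep_le_dim[of A U BU] A fU U by auto
  have "\<forall>a\<in>A. \<exists>w\<in>W. f w = a" using A(1) by auto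
  then obtain p where p: "\<And>a. a\<in>A \<Longrightarrow> p a \<in> W \<and> f (p a) = a" by metis
  let ?K0 = "{w\<in>W. f w = 0}"
  obtain K where K: "K \<subseteq> ?K0" "independent K" "?K0 \<subseteq> span K" "card K = dim ?K0"
    using basis_exists by blast
  have fK: "finite K" using independent_span_bound[OF fW(2) K(2)] K(1) fW(1) by auto
  have sp: "W \<subseteq> span (K \<union> p ` A)"
  proof
    fix w assume w: "w \<in> W"
    then have "f w \<in> span A" using A(3) by auto
    then obtain r where r: "f w = (\<Sum>a\<in>A. r a *s a)" using span_finite[OF fA(1)] by auto
    define t where "t = (\<Sum>a\<in>A. r a *s p a)"
    have tW: "t \<in> W" unfolding t_def using p W by (auto intro!: subspace_sum subspace_scale)
    have ft: "f t = f w" unfolding t_def r by (simp add: fh.sum f(2) p)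
    have "w - t \<in> ?K0" using w tW W ft by (auto simp: subspace_diff fh.diff)
    then have "w - t \<in> span (K \<union> p`A)" using K(3) span_mono[of K "K \<union> p`A"] by auto
    moreover have "t \<in> span (K \<union> p ` A)" unfolding t_def
      by (intro span_sum span_scale span_base) auto
    ultimately have "(w - t) + t \<in> span (K \<union> p ` A)" by (rule span_add)
    then show "w \<in> span (K \<union> p ` A)" by simp
  qed
  have "dim W \<le> card (K \<union> p ` A)" by (rule dim_le_card[OF sp]) (use fK fA in auto)
  also have "\<dots> \<le> card K + card (p ` A)" by (rule card_Un_le)
  also have "card (p`A) \<le> card A" by (rule card_image_le[OF fA(1)])
  finally show ?thesis using K(4) fA(2) by simp
qed

lemma dim_list:
  assumes "subspace W" "W \<subseteq> span BW" "finite BW"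
    and "\<forall>f\<in>set fs. (\<forall>x y. f (x + y) = f x + f y) \<and> (\<forall>a x. f (a *s x) = a *s f x) \<and>
        (\<exists>U BU. f ` W \<subseteq> U \<and> U \<subseteq> span BU \<and> finite BU \<and> dim U \<le> N)"
  shows "dim W \<le> dim {w\<in>W. \<forall>f\<in>set fs. f w = 0} + length fs * N"
  using assms
proof (induction fs arbitrary: W)
  case Nil
  then show ?case by simp
next
  case (Cons f fs)
  let ?W' = "{w\<in>W. f w = 0}"
  obtain U BU where U: "f ` W \<subseteq> U" "U \<subseteq> span BU" "finite BU" "dim U \<le> N"
    using Cons.prems(4) by auto
  have fl: "\<And>x y. f (x + y) = f x + f y" "\<And>a x. f (a *s x) = a *s f x"
    using Cons.prems(4) by auto
  have s1: "dim W \<le> dim ?W' + dim U"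
    by (rule dim_step[OF Cons.prems(1-3) fl U(1-3)])
  have sub': "subspace ?W'"
  proof -
    interpret fh: module_hom scale scale f
      by (simp add: module_hom_iff fl module_axioms)
    show ?thesis using Cons.prems(1) unfolding subspace_def
      by (auto simp: fh.add fh.scale)
  qed
  have "dim ?W' \<le> dim {w\<in>?W'. \<forall>f\<in>set fs. f w = 0} + length fs * N"
  proof (rule Cons.IH[OF sub' _ Cons.prems(3)])
    show "?W' \<subseteq> span BW" using Cons.prems(2) by blast
    show "\<forall>f\<in>set fs. (\<forall>x y. f (x + y) = f x + f y) \<and> (\<forall>a x. f (a *s x) = a *s f x) \<and>
        (\<exists>U BU. f ` ?W' \<subseteq> U \<and> U \<subseteq> span BU \<and> finite BU \<and> dim U \<le> N)"
    proof
      fix g assume g: "g \<in> set fs"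
      then have h: "(\<forall>x y. g (x + y) = g x + g y) \<and> (\<forall>a x. g (a *s x) = a *s g x) \<and>
        (\<exists>U BU. g ` W \<subseteq> U \<and> U \<subseteq> span BU \<and> finite BU \<and> dim U \<le> N)"
        using Cons.prems(4) by simp
      have "g ` ?W' \<subseteq> g ` W" by blast
      with h show "(\<forall>x y. g (x + y) = g x + g y) \<and> (\<forall>a x. g (a *s x) = a *s g x) \<and>
        (\<exists>U BU. g ` ?W' \<subseteq> U \<and> U \<subseteq> span BU \<and> finite BU \<and> dim U \<le> N)"
        by (meson subset_trans)
    qed
  qed
  moreover have "{w\<in>?W'. \<forall>f\<in>set fs. f w = 0} = {w\<in>W. \<forall>g\<in>set (f#fs). g w = 0}" by auto
  ultimately show ?case using s1 U(4) by simp
qed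

end


lemma sg:
  assumes "add_subgroup A"
  shows "0 \<in> A" "x \<in> A \<Longrightarrow> y \<in> A \<Longrightarrow> x + y \<in> A" "x \<in> A \<Longrightarrow> - x \<in> A"
    "x \<in> A \<Longrightarrow> y \<in> A \<Longrightarrow> x - y \<in> A"
  using assms unfolding add_subgroup_def
  by (auto, metis diff_conv_add_uminus)

theorem lemma3p5:
  fixes G G1 G2 :: "complex set"
    and s :: "complex \<Rightarrow> 'v::ab_group_add \<Rightarrow> 'v"
    and c :: complex
    and d :: "complex \<Rightarrow> 'v \<Rightarrow> 'v"
    and lam :: complex
  assumes "add_subgroup G" and "G \<noteq> {0}" and "group_rank G \<ge> 2"
    and "vir_module G s c d"
    and "\<not> vir_trivial G c d"
    and "vir_irreducible G s d"
    and "harish_chandra s d"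
    and "lam \<in> supp s d" and "lam \<noteq> 0"
    and "add_subgroup G1" and "G1 \<subseteq> G"
    and "add_subgroup G2" and "G2 \<subseteq> G"
    and "unif_bounded_coset s d lam G1"
    and "unif_bounded_coset s d lam G2"
  shows "unif_bounded_coset s d lam (set_plus_c G1 G2)"
proof -
  have VS: "vector_space s" using assms(4) unfolding vir_module_def by blast
  interpret vs: vector_space s by (rule VS)
  have dadd: "\<And>x u v. x \<in> G \<Longrightarrow> d x (u + v) = d x u + d x v"
    and dhom: "\<And>x a v. x \<in> G \<Longrightarrow> d x (s a v) = s a (d x v)"
    and br: "\<And>x y v. x \<in> G \<Longrightarrow> y \<in> G \<Longrightarrow> d x (d y v) - d y (d x v) =
         s (y - x) (d (x + y) v) + s (if x = - y then (x ^ 3 - x) / 12 * c else 0) v"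
    using assms(4) unfolding vir_module_def by blast+
  have d0: "\<And>x. x \<in> G \<Longrightarrow> d x 0 = 0"
  proof -
    fix x assume "x \<in> G"
    then have "d x (0 + 0) = d x 0 + d x 0" by (rule dadd)
    then show "d x 0 = 0" by simp
  qed
  have G0: "0 \<in> G" using sg(1)[OF assms(1)] .
  have shift: "\<And>x v \<mu>. x \<in> G \<Longrightarrow> v \<in> weight_space s d \<mu> \<Longrightarrow> d x v \<in> weight_space s d (\<mu> + x)"
  proof -
    fix x v \<mu> assume x: "x \<in> G" and v: "v \<in> weight_space s d \<mu>"
    have v0: "d 0 v = s \<mu> v" using v unfolding weight_space_def by simp
    have "d 0 (d x v) - d x (d 0 v) = s (x - 0) (d (0 + x) v) + s (if 0 = - x then (0 ^ 3 - 0) / 12 * c else 0) v"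
      by (rule br[OF G0 x])
    then have "d 0 (d x v) = d x (s \<mu> v) + s x (d x v)" by (simp add: v0 algebra_simps)
    also have "\<dots> = s (\<mu> + x) (d x v)" by (simp add: dhom[OF x] vs.scale_left_distrib)
    finally show "d x v \<in> weight_space s d (\<mu> + x)" unfolding weight_space_def by simp
  qed
  have wsub: "\<And>\<mu>. vs.subspace (weight_space s d \<mu>)"
    unfolding vs.subspace_def weight_space_def
    by (auto simp: d0[OF G0] dadd[OF G0] dhom[OF G0] vs.scale_right_distrib mult.commute)
  have wfin: "\<And>\<mu>. fin_dim s (weight_space s d \<mu>)"
    using assms(7) unfolding harish_chandra_def by blast
  obtain N1 where N1: "\<And>h. h \<in> G1 \<Longrightarrow> fin_dim s (weight_space s d (lam + h)) \<and>
      vs.dim (weight_space s d (lam + h)) \<le> N1"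
    using assms(14) unfolding unif_bounded_coset_def by blast
  obtain N2 where N2: "\<And>h. h \<in> G2 \<Longrightarrow> fin_dim s (weight_space s d (lam + h)) \<and>
      vs.dim (weight_space s d (lam + h)) \<le> N2"
    using assms(15) unfolding unif_bounded_coset_def by blast
  define D0 where "D0 = vs.dim (weight_space s d 0)"
  show ?thesis unfolding unif_bounded_coset_def
  proof (intro exI[of _ "6 * (N1 + N2) + D0 + N1 + N2"] ballI conjI)
    fix z assume "z \<in> set_plus_c G1 G2"
    then obtain g1 g2 where g: "g1 \<in> G1" "g2 \<in> G2" "z = g1 + g2"
      unfolding set_plus_c_def by blast
    show "fin_dim s (weight_space s d (lam + z))" by (rule wfin)
    define \<mu> where "\<mu> = lam + z"
    show "vs.dim (weight_space s d (lam + z)) \<le> 6 * (N1 + N2) + D0 + N1 + N2"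
    proof (cases "g1 = 0 \<or> g2 = 0 \<or> g1 = g2 \<or> \<mu> = 0")
      case True
      then show ?thesis
      proof (elim disjE)
        assume "g1 = 0" then show ?thesis using N2[OF g(2)] g(3) by simp
      next
        assume "g2 = 0" then show ?thesis using N1[OF g(1)] g(3) by simp
      next
        assume "g1 = g2" 
        then have "g1 + g2 \<in> G1" using sg(2)[OF assms(10) g(1) g(1)] by simp
        then show ?thesis using N1[of "g1 + g2"] g(3) by simp
      next
        assume "\<mu> = 0" then show ?thesis using \<mu>_def D0_def by simp
      qed
    next
      case False
      then have ne: "g1 \<noteq> 0" "g2 \<noteq> 0" "g1 \<noteq> g2" "\<mu> \<noteq> 0" by auto
      let ?W = "weight_space s d \<mu>"
      define fs where "fs = [d (-g2), d (g1 - g2), d (g1 + g1 - g2), d (-g1), d (g2 - g1), d (g2 + g2 - g1)]"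
      have g1G: "g1 \<in> G" and g2G: "g2 \<in> G" using g assms(11,13) by auto
      note sgG = sg[OF assms(1)]
      have inG: "-g2 \<in> G" "g1 - g2 \<in> G" "g1+g1-g2 \<in> G" "-g1 \<in> G" "g2 - g1 \<in> G" "g2+g2-g1 \<in> G"
        using sgG(3)[OF g2G] sgG(4)[OF g1G g2G] sgG(4)[OF sgG(2)[OF g1G g1G] g2G]
          sgG(3)[OF g1G] sgG(4)[OF g2G g1G] sgG(4)[OF sgG(2)[OF g2G g2G] g1G] by auto
      have inG1: "g1 + g1 \<in> G1" "g1 + g1 + g1 \<in> G1" using sg(2)[OF assms(10) g(1) g(1)] sg(2)[OF assms(10) sg(2)[OF assms(10) g(1) g(1)] g(1)] by auto
      have inG2: "g2 + g2 \<in> G2" "g2 + g2 + g2 \<in> G2" using sg(2)[OF assms(12) g(2) g(2)] sg(2)[OF assms(12) sg(2)[OF assms(12) g(2) g(2)] g(2)] by auto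
      have good: "(\<forall>u v. d x (u + v) = d x u + d x v) \<and> (\<forall>a u. d x (s a u) = s a (d x u)) \<and>
          (\<exists>U BU. d x ` ?W \<subseteq> U \<and> U \<subseteq> vs.span BU \<and> finite BU \<and> vs.dim U \<le> N1 + N2)"
        if x: "x \<in> G" and xh: "\<mu> + x = lam + h" and hN: "fin_dim s (weight_space s d (lam + h)) \<and>
          vs.dim (weight_space s d (lam + h)) \<le> N" and NN: "N \<le> N1 + N2" for x h N
      proof (intro conjI allI)
        show "d x (u + v) = d x u + d x v" for u v by (rule dadd[OF x])
        show "d x (s a u) = s a (d x u)" for a u by (rule dhom[OF x])
        have "d x ` ?W \<subseteq> weight_space s d (lam + h)"
        proof (rule image_subsetI)
          fix w assume "w \<in> ?W"
          from shift[OF x this] xh show "d x w \<in> weight_space s d (lam + h)" by simp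
        qed
        moreover obtain BU where "finite BU" "weight_space s d (lam + h) \<subseteq> vs.span BU"
          using hN unfolding fin_dim_def by blast
        ultimately show "\<exists>U BU. d x ` ?W \<subseteq> U \<and> U \<subseteq> vs.span BU \<and> finite BU \<and> vs.dim U \<le> N1 + N2"
          using hN NN by (intro exI[of _ "weight_space s d (lam + h)"] exI[of _ BU]) auto
      qed
      have eqs: "\<mu> + -g2 = lam + g1" "\<mu> + (g1 - g2) = lam + (g1 + g1)" "\<mu> + (g1+g1-g2) = lam + (g1+g1+g1)"
        "\<mu> + -g1 = lam + g2" "\<mu> + (g2 - g1) = lam + (g2 + g2)" "\<mu> + (g2+g2-g1) = lam + (g2+g2+g2)"
        unfolding \<mu>_def g(3) by (simp_all add: algebra_simps)
      have hyp: "\<forall>f\<in>set fs. (\<forall>x y. f (x + y) = f x + f y) \<and> (\<forall>a x. f (s a x) = s a (f x)) \<and>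
        (\<exists>U BU. f ` ?W \<subseteq> U \<and> U \<subseteq> vs.span BU \<and> finite BU \<and> vs.dim U \<le> N1 + N2)"
        unfolding fs_def
        using good[OF inG(1) eqs(1) N1[OF g(1)] le_add1] good[OF inG(2) eqs(2) N1[OF inG1(1)] le_add1]
          good[OF inG(3) eqs(3) N1[OF inG1(2)] le_add1]
          good[OF inG(4) eqs(4) N2[OF g(2)] le_add2] good[OF inG(5) eqs(5) N2[OF inG2(1)] le_add2]
          good[OF inG(6) eqs(6) N2[OF inG2(2)] le_add2]
        by (simp only: set_simps ball_simps insert_iff empty_iff) blast
      obtain BW where BW: "finite BW" "?W \<subseteq> vs.span BW" using wfin[of \<mu>] unfolding fin_dim_def by blast
      have main: "vs.dim ?W \<le> vs.dim {w\<in>?W. \<forall>f\<in>set fs. f w = 0} + length fs * (N1 + N2)"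
        by (rule vs.dim_list[OF wsub BW(2) BW(1) hyp])
      have ker: "{w\<in>?W. \<forall>f\<in>set fs. f w = 0} \<subseteq> {0}"
      proof
        fix v assume "v \<in> {w\<in>?W. \<forall>f\<in>set fs. f w = 0}"
        then have v: "d 0 v = s \<mu> v" and k: "d (-g2) v = 0" "d (g1 - g2) v = 0" "d (g1 + g1 - g2) v = 0"
          "d (-g1) v = 0" "d (g2 - g1) v = 0" "d (g2 + g2 - g1) v = 0"
          by (auto simp: fs_def weight_space_def)
        show "v \<in> {0}"
        proof (rule ccontr)
          assume "v \<notin> {0}" then have vne: "v \<noteq> 0" by simp
          define y where "y = g1 - g2"
          have yne: "y \<noteq> 0" using ne(3) by (simp add: y_def)
          have yG: "y \<in> G" "-y \<in> G" "y + y \<in> G" "-(y+y) \<in> G" unfolding y_def using inG(2) sgG(3)[OF inG(2)] sgG(2)[OF inG(2) inG(2)] sgG(3)[OF sgG(2)[OF inG(2) inG(2)]] by auto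
          have A0: "s ((g1+g1-g2) - -g2) (d (-g2 + (g1+g1-g2)) v) + s (if -g2 = -(g1+g1-g2) then ((-g2)^3 - -g2)/12*c else 0) v = 0"
            using br[OF inG(1) inG(3), of v] k d0 inG by simp
          have c1: "\<not> (-g2 = -(g1+g1-g2))"
          proof
            assume "-g2 = -(g1+g1-g2)" then have "2 * g1 = 2 * g2" by (simp add: algebra_simps)
            then show False using ne(3) by simp
          qed
          have "-g2 + (g1+g1-g2) = y + y" "(g1+g1-g2) - -g2 = g1 + g1" by (simp_all add: y_def algebra_simps)
          with A0 c1 have "s (g1 + g1) (d (y + y) v) = 0" by simp
          moreover have "g1 + g1 \<noteq> 0" using ne(1) by (simp flip: mult_2)  
          ultimately have kA: "d (y + y) v = 0" by simp
          have B0: "s ((g2+g2-g1) - -g1) (d (-g1 + (g2+g2-g1)) v) + s (if -g1 = -(g2+g2-g1) then ((-g1)^3 - -g1)/12*c else 0) v = 0"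
            using br[OF inG(4) inG(6), of v] k d0 inG by simp
          have c2: "\<not> (-g1 = -(g2+g2-g1))"
          proof
            assume "-g1 = -(g2+g2-g1)" then have "2 * g1 = 2 * g2" by (simp add: algebra_simps)
            then show False using ne(3) by simp
          qed
          have "-g1 + (g2+g2-g1) = -(y + y)" "(g2+g2-g1) - -g1 = g2 + g2" by (simp_all add: y_def algebra_simps)
          with B0 c2 have "s (g2 + g2) (d (-(y + y)) v) = 0" by simp
          moreover have "g2 + g2 \<noteq> 0" using ne(2) by (simp flip: mult_2)  
          ultimately have kB: "d (-(y + y)) v = 0" by simp
          have ky: "d y v = 0" "d (-y) v = 0" using k(2,5) by (simp_all add: y_def)
          have C0: "s (-y - y) (d (y + -y) v) + s (if y = - (-y) then (y^3 - y)/12*c else 0) v = 0"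
            using br[OF yG(1) yG(2), of v] ky d0 yG by simp
          then have "s ((-y - y) * \<mu> + (y^3 - y)/12*c) v = 0"
            by (simp add: v vs.scale_left_distrib)
          then have e1: "(-y - y) * \<mu> + (y^3 - y)/12*c = 0" using vne by simp
          have D0: "s (-(y+y) - (y+y)) (d ((y+y) + -(y+y)) v) + s (if (y+y) = - (-(y+y)) then ((y+y)^3 - (y+y))/12*c else 0) v = 0"
            using br[OF yG(3) yG(4), of v] kA kB d0 yG by simp
          then have "s ((-(y+y) - (y+y)) * \<mu> + ((y+y)^3 - (y+y))/12*c) v = 0"
            by (simp add: v vs.scale_left_distrib)
          then have e2: "(-(y+y) - (y+y)) * \<mu> + ((y+y)^3 - (y+y))/12*c = 0" using vne by simp
          have "\<mu> = 0" by (rule alg[OF yne e1 e2])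
          then show False using ne(4) by simp
        qed
      qed
      have "vs.dim {w\<in>?W. \<forall>f\<in>set fs. f w = 0} \<le> card ({}::'v set)"
        by (rule vs.dim_le_card) (use ker in auto)
      then have "vs.dim ?W \<le> 6 * (N1 + N2)" using main by (simp add: fs_def)
      then show ?thesis by (simp add: \<mu>_def)
    qed
  qed
qed

end
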